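(* Consider problem (PI): minimize $f(x)$ subject to $x\in X$, $g_i(x)\le 0$, $i=1,\dots,m$, where $\Gamma\subseteq\mathbb R^n$ is an open convex set and $X\subseteq\Gamma$ is convex. Let $\bar S$ be its solution set and $\bar x\in\bar S$. Assume $f:\Gamma\to\mathbb R$ is continuously differentiable and quasiconvex on $\Gamma$, $g_i$ for $i\in I(\bar x)$ are differentiable and quasiconvex on $\Gamma$, $g_i$ for $i\notin I(\bar x)$ are continuous at $\bar x$, $\nabla f(\bar x)\ne 0$, GMFCQ holds at $\bar x$, and $\lambda$ is a (fixed) KKT multiplier at $\bar x$. Define \[ \begin{aligned} S_1'(\lambda)&:=\{x\in X_1(\lambda)\mid \nabla f(x)^T(\bar x-x)=0,\ \nabla f(x)\ne0\},\\ S_2'(\lambda)&:=\{x\in X_1(\lambda)\mid \nabla f(x)^T(\bar x-x)\ge0,\ \nabla f(x)\ne0\},\\ S_3'(\lambda)&:=\{x\in X_1(\lambda)\mid \nabla f(x)^T(\bar x-x)=\nabla f(\bar x)^T(x-\bar x),\ \nabla f(x)\ne0\},\\ S_4'(\lambda)&:=\{x\in X_1(\lambda)\mid \nabla f(x)^T(\bar x-x)\ge\nabla f(\bar x)^T(x-\bar x),\ \nabla f(x)\ne0\},\\ S_5'(\lambda)&:=\{x\in X_1(\lambda)\mid \nabla f(x)^T(\bar x-x)=\nabla f(\bar x)^T(x-\bar x)=0,\ \nabla f(x)\ne0\}. \end{aligned} \] Then $\bar S=S_1'(\lambda)=S_2'(\lambda)=S_3'(\lambda)=S_4'(\lambda)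=S_5'(\lambda)$.
   Context: Quasiconvexity on $\Gamma$: $f(x+t(y-x))\le\max\{f(x),f(y)\}$ for all $x,y\in\Gamma$, $t\in[0,1]$. Feasible set $S:=\{x\in X\mid g_i(x)\le0,\ i=1,\dots,m\}$; $\bar S$ the set of global minimizers of $f$ on $S$. Active index set $I(x):=\{i\mid g_i(x)=0\}$. For a cone $C$, its negative polar is $C^*:=\{x\in\mathbb R^n\mid c^Tx\le 0\ \forall c\in C\}$; $T_X(x)$ is the tangent cone of $X$ at $x$ and $N_X(x):=(T_X(x))^*$ is the normal cone. GMFCQ holds at $\bar x$ iff there is $y\in (N_X(\bar x))^*$ with $\nabla g_i(\bar x)^Ty<0$ for all $i\in I(\bar x)$. A KKT multiplier at $\bar x$ is $\lambda\in\mathbb R^m$ with $\lambda_i\ge0$ for all $i$, $\lambda_ig_i(\bar x)=0$ for all $i$, and $\big[\nabla f(\bar x)+\sum_{i\in I(\bar x)}\lambda_i\nabla g_i(\bar x)\big]^T(x-\bar x)\ge0$ for all $x\in X$. Define $\tilde I(\bar x,\lambda):=\{i\mid g_i(\bar x)=0,\ \lambda_i>0\}$ and $X_1(\lambda):=\{x\in X\mid g_i(x)=0\ \forall i\in\tilde I(\bar x,\lambda),\ g_i(x)\le0\ \forall i\notin\tilde I(\bar x,\lambda)\}$. *)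

theory Defs
  imports "HOL-Analysis.Analysis"
begin

definition quasiconvex_on :: "'a::real_vector set \<Rightarrow> ('a \<Rightarrow> real) \<Rightarrow> bool" where
  "quasiconvex_on \<Gamma> f \<longleftrightarrow>
     (\<forall>x\<in>\<Gamma>. \<forall>y\<in>\<Gamma>. \<forall>t::real. 0 \<le> t \<and> t \<le> 1 \<longrightarrow> f (x + t *\<^sub>R (y - x)) \<le> max (f x) (f y))"

definition neg_polar :: "'a::real_inner set \<Rightarrow> 'a set" where
  "neg_polar C = {x. \<forall>c\<in>C. inner c x \<le> 0}"

definition tangent_cone :: "'a::real_normed_vector set \<Rightarrow> 'a \<Rightarrow> 'a set" where
  "tangent_cone X x = {d. \<exists>t :: nat \<Rightarrow> real. \<exists>dd :: nat \<Rightarrow> 'a.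
      (\<forall>k. 0 < t k) \<and> t \<longlonglongrightarrow> 0 \<and> dd \<longlonglongrightarrow> d \<and> (\<forall>k. x + t k *\<^sub>R dd k \<in> X)}"

definition normal_cone :: "'a::real_inner set \<Rightarrow> 'a \<Rightarrow> 'a set" where
  "normal_cone X x = neg_polar (tangent_cone X x)"

end

theory Submission
  imports Defs
begin

lemma dir_deriv:
  fixes f :: "'a::real_inner \<Rightarrow> real"
  assumes "GDERIV f a :> D"
  shows "((\<lambda>t. f (a + t *\<^sub>R v)) has_real_derivative inner D v) (at 0)"
proof -
  have 1: "((\<lambda>t::real. a + t *\<^sub>R v) has_derivative (\<lambda>t. t *\<^sub>R v)) (at 0)"
    by (auto intro!: derivative_eq_intros)
  have 2: "(f has_derivative (\<lambda>h. inner h D)) (at (a + 0 *\<^sub>R v))"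
    using assms by (simp add: gderiv_def)
  have 3: "(\<lambda>t. inner (t *\<^sub>R v) D) = (*) (inner D v)"
    by (auto simp: fun_eq_iff inner_commute)
  have "((\<lambda>t. f (a + t *\<^sub>R v)) has_derivative (\<lambda>t. inner (t *\<^sub>R v) D)) (at 0)"
    using has_derivative_compose[OF 1 2] by simp
  then show ?thesis
    unfolding has_field_derivative_def 3 .
qed

lemma qc1:
  fixes h :: "'a::real_inner \<Rightarrow> real"
  assumes qc: "quasiconvex_on \<Gamma> h" and d: "GDERIV h a :> D"
    and ab: "a \<in> \<Gamma>" "b \<in> \<Gamma>" and le: "h b \<le> h a"
  shows "inner D (b - a) \<le> 0"
proof (rule ccontr)
  assume "\<not> ?thesis"
  hence "0 < inner D (b - a)" by simp
  from DERIV_pos_inc_right[OF dir_deriv[OF d, of "b - a"] this]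
  obtain e where e: "e > 0" "\<forall>t>0. t < e \<longrightarrow> h (a + 0 *\<^sub>R (b - a)) < h (a + (0 + t) *\<^sub>R (b - a))"
    by blast
  define t where "t = min (e/2) 1"
  have t: "0 < t" "t < e" "t \<le> 1" using e by (auto simp: t_def)
  have "h a < h (a + t *\<^sub>R (b - a))" using e t by auto
  moreover have "h (a + t *\<^sub>R (b - a)) \<le> max (h a) (h b)"
    using qc ab t unfolding quasiconvex_on_def by auto
  ultimately show False using le by auto
qed

lemma qc2:
  fixes h :: "'a::real_inner \<Rightarrow> real"
  assumes op: "open \<Gamma>" and qc: "quasiconvex_on \<Gamma> h"
    and d: "\<forall>z\<in>\<Gamma>. GDERIV h z :> Dh z"
    and ab: "a \<in> \<Gamma>" "b \<in> \<Gamma>" and nz: "Dh a \<noteq> 0" and lt: "h b < h a"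
  shows "inner (Dh a) (b - a) < 0"
proof -
  have "isCont h b"
    using d ab by (metis gderiv_def has_derivative_continuous)
  then obtain e1 where e1: "e1 > 0" "\<forall>y. dist y b < e1 \<longrightarrow> dist (h y) (h b) < h a - h b"
    using lt unfolding continuous_at_eps_delta by (metis diff_gt_0_iff_gt)
  obtain e2 where e2: "e2 > 0" "ball b e2 \<subseteq> \<Gamma>" using op ab openE by blast
  define D where "D = Dh a"
  have nD: "norm D > 0" using nz by (simp add: D_def)
  define del where "del = min e1 e2 / (2 * norm D)"
  have del: "del > 0" using e1 e2 nD by (simp add: del_def)
  define b' where "b' = b + del *\<^sub>R D"
  have "dist b' b = del * norm D" using del by (simp add: b'_def dist_norm)
  also have "\<dots> = min e1 e2 / 2" using nD by (simp add: del_def)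
  finally have db: "dist b' b < e1" "dist b' b < e2" using e1 e2 by auto
  have "b' \<in> \<Gamma>" using db e2 by (auto simp: dist_commute)
  have "h b' < h a" using e1 db by (auto simp: dist_real_def)
  hence "inner D (b' - a) \<le> 0"
    using qc1[OF qc _ ab(1) \<open>b' \<in> \<Gamma>\<close>] d ab by (simp add: D_def)
  moreover have "inner D (b' - a) = inner D (b - a) + del * (norm D)^2"
    by (simp add: b'_def inner_add_right inner_diff_right power2_norm_eq_inner algebra_simps)
  moreover have "del * (norm D)^2 > 0" using del nD by simp
  ultimately show ?thesis by (simp add: D_def)
qed

lemma zprop:
  fixes f :: "'a::real_inner \<Rightarrow> real"
  assumes op: "open \<Gamma>" and qc: "quasiconvex_on \<Gamma> f"
    and d: "\<forall>z\<in>\<Gamma>. GDERIV f z :> df z"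
    and ab: "a \<in> \<Gamma>" "b \<in> \<Gamma>" and z: "df b = 0" and le: "f a \<le> f b"
    and r: "0 < r" "r \<le> 1" and yG: "a + r *\<^sub>R (b - a) \<in> \<Gamma>"
    and fy: "f (a + r *\<^sub>R (b - a)) = f b"
  shows "df (a + r *\<^sub>R (b - a)) = 0"
proof (rule ccontr)
  define y where "y = a + r *\<^sub>R (b - a)"
  define e where "e = df y"
  assume "df (a + r *\<^sub>R (b - a)) \<noteq> 0"
  hence ne: "e \<noteq> 0" by (simp add: e_def y_def)
  have dy: "GDERIV f y :> e" using d yG by (simp add: e_def y_def)
  have db: "GDERIV f b :> 0" using d ab z by metis
  have pe: "0 < inner e e" using ne by simp
  have D1: "((\<lambda>t. f (y + t *\<^sub>R e) - f (b + t *\<^sub>R ((1/r) *\<^sub>R e))) has_real_derivative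
       inner e e - inner 0 ((1/r) *\<^sub>R e)) (at 0)"
    by (intro DERIV_diff dir_deriv dy db)
  from DERIV_pos_inc_right[OF D1] pe
  obtain d1 where d1: "d1 > 0" "\<forall>t>0. t < d1 \<longrightarrow>
     f (y + 0 *\<^sub>R e) - f (b + 0 *\<^sub>R ((1/r) *\<^sub>R e)) <
     f (y + (0+t) *\<^sub>R e) - f (b + (0+t) *\<^sub>R ((1/r) *\<^sub>R e))" by auto
  from DERIV_pos_inc_right[OF dir_deriv[OF dy, of e] pe]
  obtain d2 where d2: "d2 > 0" "\<forall>t>0. t < d2 \<longrightarrow> f (y + 0 *\<^sub>R e) < f (y + (0+t) *\<^sub>R e)" by blast
  obtain e2 where e2: "e2 > 0" "ball b e2 \<subseteq> \<Gamma>" using op ab openE by blast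
  have nE: "norm e > 0" using ne by simp
  define K where "K = e2 * r / norm e"
  define t where "t = min (min d1 d2) K / 2"
  have q: "K > 0" using e2 r nE by (simp add: K_def)
  have t: "0 < t" "t < d1" "t < d2" "t < K"
    using d1(1) d2(1) q unfolding t_def by (auto simp: min_def)
  define b' where "b' = b + t *\<^sub>R ((1/r) *\<^sub>R e)"
  have "dist b b' = t / r * norm e" using t r by (simp add: b'_def dist_norm)
  also have "\<dots> < e2" using t r nE by (simp add: field_simps K_def)
  finally have "b' \<in> \<Gamma>" using e2 by auto
  have eq: "a + r *\<^sub>R (b' - a) = y + t *\<^sub>R e"
    using r by (simp add: b'_def y_def algebra_simps)
  have "f (a + r *\<^sub>R (b' - a)) \<le> max (f a) (f b')"
    using qc ab \<open>b' \<in> \<Gamma>\<close> r unfolding quasiconvex_on_def by auto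
  moreover have "f b' < f (y + t *\<^sub>R e)"
    using d1 t fy by (simp add: b'_def y_def)
  moreover have "f a < f (y + t *\<^sub>R e)"
  proof -
    have "f b < f (y + t *\<^sub>R e)" using d2 t fy by (simp add: y_def)
    thus ?thesis using le by linarith
  qed
  ultimately show False using eq by auto
qed

theorem theorem5:
  fixes \<Gamma> X :: "(real^'n) set"
    and f :: "real^'n \<Rightarrow> real" and df :: "real^'n \<Rightarrow> real^'n"
    and g :: "nat \<Rightarrow> real^'n \<Rightarrow> real" and dg :: "nat \<Rightarrow> real^'n \<Rightarrow> real^'n"
    and m :: nat and xbar :: "real^'n" and lam :: "nat \<Rightarrow> real"
    and S Sbar I :: "(real^'n) set" and Itil :: "nat set" and X1 :: "(real^'n) set"
  assumes Gamma: "open \<Gamma>" "convex \<Gamma>"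
    and X: "X \<subseteq> \<Gamma>" "convex X"
    and S_def: "S = {x \<in> X. \<forall>i\<in>{1..m}. g i x \<le> 0}"
    and Sbar_def: "Sbar = {x \<in> S. \<forall>y\<in>S. f x \<le> f y}"
    and xbar: "xbar \<in> Sbar"
    and f_C1: "\<forall>x\<in>\<Gamma>. GDERIV f x :> df x" "continuous_on \<Gamma> df"
    and f_qc: "quasiconvex_on \<Gamma> f"
    and g_act: "\<forall>i\<in>{1..m}. g i xbar = 0 \<longrightarrow>
                 (\<forall>x\<in>\<Gamma>. GDERIV (g i) x :> dg i x) \<and> quasiconvex_on \<Gamma> (g i)"
    and g_inact: "\<forall>i\<in>{1..m}. g i xbar \<noteq> 0 \<longrightarrow> isCont (g i) xbar"
    and df_nz: "df xbar \<noteq> 0"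
    and GMFCQ: "\<exists>y\<in>neg_polar (normal_cone X xbar).
                  \<forall>i\<in>{1..m}. g i xbar = 0 \<longrightarrow> inner (dg i xbar) y < 0"
    and KKT: "\<forall>i\<in>{1..m}. lam i \<ge> 0 \<and> lam i * g i xbar = 0"
             "\<forall>x\<in>X. inner (df xbar + (\<Sum>i\<in>{i\<in>{1..m}. g i xbar = 0}. lam i *\<^sub>R dg i xbar))
                          (x - xbar) \<ge> 0"
    and Itil_def: "Itil = {i\<in>{1..m}. g i xbar = 0 \<and> lam i > 0}"
    and X1_def: "X1 = {x \<in> X. (\<forall>i\<in>Itil. g i x = 0) \<and> (\<forall>i\<in>{1..m} - Itil. g i x \<le> 0)}"
  shows "Sbar = {x \<in> X1. inner (df x) (xbar - x) = 0 \<and> df x \<noteq> 0} \<and>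
         Sbar = {x \<in> X1. inner (df x) (xbar - x) \<ge> 0 \<and> df x \<noteq> 0} \<and>
         Sbar = {x \<in> X1. inner (df x) (xbar - x) = inner (df xbar) (x - xbar) \<and> df x \<noteq> 0} \<and>
         Sbar = {x \<in> X1. inner (df x) (xbar - x) \<ge> inner (df xbar) (x - xbar) \<and> df x \<noteq> 0} \<and>
         Sbar = {x \<in> X1. inner (df x) (xbar - x) = inner (df xbar) (x - xbar)
                          \<and> inner (df xbar) (x - xbar) = 0 \<and> df x \<noteq> 0}"
proof -
  define A where "A = {i\<in>{1..m}. g i xbar = 0}"
  define d where "d = df xbar"
  have finA: "finite A" by (simp add: A_def)
  have dfG: "\<forall>z\<in>\<Gamma>. GDERIV f z :> df z" using f_C1 by blast
  have xbS: "xbar \<in> S" and xbmin: "\<forall>y\<in>S. f xbar \<le> f y" using xbar Sbar_def by auto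
  have SX: "S \<subseteq> X" using S_def by auto
  have xbG: "xbar \<in> \<Gamma>" using xbS SX X by auto
  have gA: "\<And>i. i \<in> A \<Longrightarrow> (\<forall>x\<in>\<Gamma>. GDERIV (g i) x :> dg i x) \<and> quasiconvex_on \<Gamma> (g i)"
    using g_act by (auto simp: A_def)
  have KKT2: "\<And>x. x \<in> X \<Longrightarrow> 0 \<le> inner d (x - xbar) + (\<Sum>i\<in>A. lam i * inner (dg i xbar) (x - xbar))"
  proof -
    fix x assume "x \<in> X"
    hence "0 \<le> inner (df xbar + (\<Sum>i\<in>A. lam i *\<^sub>R dg i xbar)) (x - xbar)"
      using KKT(2) by (simp add: A_def)
    thus "0 \<le> inner d (x - xbar) + (\<Sum>i\<in>A. lam i * inner (dg i xbar) (x - xbar))"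
      by (simp add: d_def inner_add_left inner_sum_left)
  qed
  have F1: "\<And>x. x \<in> X1 \<Longrightarrow> inner d (x - xbar) \<ge> 0 \<and> x \<in> S"
  proof -
    fix x assume x: "x \<in> X1"
    have xX: "x \<in> X" using x X1_def by auto
    have xG: "x \<in> \<Gamma>" using xX X by auto
    have xS: "x \<in> S" using x unfolding X1_def S_def by force
    have "\<forall>i\<in>A. lam i * inner (dg i xbar) (x - xbar) \<le> 0"
    proof
      fix i assume i: "i \<in> A"
      have l0: "lam i \<ge> 0" using KKT(1) i by (auto simp: A_def)
      show "lam i * inner (dg i xbar) (x - xbar) \<le> 0"
      proof (cases "lam i = 0")
        case True thus ?thesis by simp
      next
        case False
        hence "i \<in> Itil" using l0 i by (auto simp: A_def Itil_def)
        hence "g i x = 0" using x X1_def by auto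
        hence "g i x \<le> g i xbar" using i by (simp add: A_def)
        hence "inner (dg i xbar) (x - xbar) \<le> 0"
          using qc1[of \<Gamma> "g i" xbar "dg i xbar" x] gA[OF i] xbG xG by blast
        thus ?thesis using l0 by (simp add: mult_nonneg_nonpos)
      qed
    qed
    hence "(\<Sum>i\<in>A. lam i * inner (dg i xbar) (x - xbar)) \<le> 0" by (simp add: sum_nonpos)
    thus "inner d (x - xbar) \<ge> 0 \<and> x \<in> S" using KKT2[OF xX] xS by linarith
  qed
  have F2: "\<And>x. x \<in> Sbar \<Longrightarrow> x \<in> X1 \<and> inner d (x - xbar) = 0 \<and> f x = f xbar"
  proof -
    fix x assume x: "x \<in> Sbar"
    have xS: "x \<in> S" and fx: "f x = f xbar" using x xbS xbmin Sbar_def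
      by (auto intro: antisym)
    have xX: "x \<in> X" using xS SX by auto
    have xG: "x \<in> \<Gamma>" using xX X by auto
    have a: "inner d (x - xbar) \<le> 0"
      using qc1[OF f_qc _ xbG xG] dfG xbG fx by (simp add: d_def)
    have b: "\<forall>i\<in>A. inner (dg i xbar) (x - xbar) \<le> 0"
    proof
      fix i assume i: "i \<in> A"
      have "g i x \<le> g i xbar" using xS i by (auto simp: S_def A_def)
      thus "inner (dg i xbar) (x - xbar) \<le> 0"
        using qc1[of \<Gamma> "g i" xbar "dg i xbar" x] gA[OF i] xbG xG by blast
    qed
    have l0: "\<forall>i\<in>A. lam i \<ge> 0" using KKT(1) by (auto simp: A_def)
    have tn: "\<forall>i\<in>A. lam i * inner (dg i xbar) (x - xbar) \<le> 0"
      using b l0 by (simp add: mult_nonneg_nonpos)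
    hence sn: "(\<Sum>i\<in>A. lam i * inner (dg i xbar) (x - xbar)) \<le> 0" by (simp add: sum_nonpos)
    have d0: "inner d (x - xbar) = 0" using KKT2[OF xX] sn a by linarith
    have s0: "(\<Sum>i\<in>A. lam i * inner (dg i xbar) (x - xbar)) = 0" using KKT2[OF xX] sn a by linarith
    have each: "\<forall>i\<in>A. lam i * inner (dg i xbar) (x - xbar) = 0"
    proof -
      have E: "((\<Sum>i\<in>A. - (lam i * inner (dg i xbar) (x - xbar))) = 0) =
          (\<forall>i\<in>A. - (lam i * inner (dg i xbar) (x - xbar)) = 0)"
        by (rule sum_nonneg_eq_0_iff[OF finA]) (use tn in auto)
      moreover have "(\<Sum>i\<in>A. - (lam i * inner (dg i xbar) (x - xbar))) = 0"
        using s0 by (simp add: sum_negf)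
      ultimately show ?thesis by simp
    qed
    have "\<forall>i\<in>Itil. g i x = 0"
    proof
      fix i assume i: "i \<in> Itil"
      hence iA: "i \<in> A" and lp: "lam i > 0" by (auto simp: Itil_def A_def)
      have ip: "inner (dg i xbar) (x - xbar) = 0" using each iA lp by auto
      obtain y where "\<forall>i\<in>{1..m}. g i xbar = 0 \<longrightarrow> inner (dg i xbar) y < 0" using GMFCQ by blast
      hence nz: "dg i xbar \<noteq> 0" using iA by (force simp: A_def)
      show "g i x = 0"
      proof (rule ccontr)
        assume "g i x \<noteq> 0"
        moreover have "g i x \<le> 0" using xS iA by (auto simp: S_def A_def)
        ultimately have "g i x < g i xbar" using iA by (auto simp: A_def)
        hence "inner (dg i xbar) (x - xbar) < 0"
          using qc2[OF Gamma(1), of "g i" "dg i" xbar x] gA[OF iA] xbG xG nz by blast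
        thus False using ip by simp
      qed
    qed
    hence "x \<in> X1" using xS xX by (auto simp: X1_def S_def)
    thus "x \<in> X1 \<and> inner d (x - xbar) = 0 \<and> f x = f xbar" using d0 fx by simp
  qed
  have F3: "\<And>x (r::real). x \<in> Sbar \<Longrightarrow> 0 \<le> r \<Longrightarrow> r \<le> 1 \<Longrightarrow>
      f (xbar + r *\<^sub>R (x - xbar)) = f xbar \<and> xbar + r *\<^sub>R (x - xbar) \<in> \<Gamma>"
  proof -
    fix x and r :: real assume x: "x \<in> Sbar" and r: "0 \<le> r" "r \<le> 1"
    have xG: "x \<in> \<Gamma>" using x Sbar_def SX X by auto
    have fx: "f x = f xbar" using F2[OF x] by simp
    have yX: "xbar + r *\<^sub>R (x - xbar) \<in> X"
    proof -
      have "xbar + r *\<^sub>R (x - xbar) = (1 - r) *\<^sub>R xbar + r *\<^sub>R x" by (simp add: algebra_simps)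
      moreover have "xbar \<in> X" "x \<in> X" using xbS x Sbar_def SX by auto
      ultimately show ?thesis using X(2) r convexD by (metis diff_add_cancel diff_ge_0_iff_ge)
    qed
    hence yG: "xbar + r *\<^sub>R (x - xbar) \<in> \<Gamma>" using X by auto
    have le: "f (xbar + r *\<^sub>R (x - xbar)) \<le> f xbar"
      using f_qc xbG xG r fx unfolding quasiconvex_on_def by fastforce
    have ge: "\<not> f (xbar + r *\<^sub>R (x - xbar)) < f xbar"
    proof
      assume "f (xbar + r *\<^sub>R (x - xbar)) < f xbar"
      hence "inner (df xbar) (xbar + r *\<^sub>R (x - xbar) - xbar) < 0"
        using qc2[OF Gamma(1) f_qc dfG xbG yG] df_nz by blast
      thus False using F2[OF x] by (simp add: d_def)
    qed
    show "f (xbar + r *\<^sub>R (x - xbar)) = f xbar \<and> xbar + r *\<^sub>R (x - xbar) \<in> \<Gamma>"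
      using le ge yG by simp
  qed
  have F4: "\<And>x. x \<in> Sbar \<Longrightarrow> df x \<noteq> 0"
  proof
    fix x assume x: "x \<in> Sbar" and z: "df x = 0"
    have xG: "x \<in> \<Gamma>" using x Sbar_def SX X by auto
    have fx: "f x = f xbar" using F2[OF x] by simp
    define y where "y = (\<lambda>n::nat. xbar + inverse (real (Suc n)) *\<^sub>R (x - xbar))"
    have y0: "\<And>n. df (y n) = 0"
    proof -
      fix n
      have r: "0 < inverse (real (Suc n))" "inverse (real (Suc n)) \<le> 1" by (auto simp: inverse_le_1_iff)
      show "df (y n) = 0"
        using zprop[OF Gamma(1) f_qc dfG xbG xG z _ r] F3[OF x, of "inverse (real (Suc n))"] r fx
        by (simp add: y_def)
    qed
    have "y \<longlonglongrightarrow> xbar + 0 *\<^sub>R (x - xbar)"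
      unfolding y_def by (intro tendsto_intros LIMSEQ_inverse_real_of_nat)
    hence yl: "y \<longlonglongrightarrow> xbar" by simp
    have "isCont df xbar"
      using f_C1(2) Gamma(1) xbG continuous_on_eq_continuous_at by blast
    hence "(\<lambda>n. df (y n)) \<longlonglongrightarrow> df xbar" using yl isCont_tendsto_compose by blast
    hence "(\<lambda>n. 0) \<longlonglongrightarrow> df xbar" using y0 by simp
    hence "df xbar = 0" using LIMSEQ_const_iff by metis
    thus False using df_nz by simp
  qed
  have F5: "\<And>x. x \<in> Sbar \<Longrightarrow> inner (df x) (xbar - x) = 0"
  proof -
    fix x assume x: "x \<in> Sbar"
    have xG: "x \<in> \<Gamma>" using x Sbar_def SX X by auto
    have fx: "f x = f xbar" using F2[OF x] by simp
    have a: "inner (df x) (xbar - x) \<le> 0"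
      using qc1[OF f_qc _ xG xbG] dfG xG fx by simp
    have "\<not> inner (df x) (xbar - x) < 0"
    proof
      assume "inner (df x) (xbar - x) < 0"
      from DERIV_neg_dec_right[OF dir_deriv[of f x "df x" "xbar - x"] this] dfG xG
      obtain e where e: "e > 0" "\<forall>h>0. h < e \<longrightarrow> f (x + 0 *\<^sub>R (xbar - x)) > f (x + (0 + h) *\<^sub>R (xbar - x))"
        by blast
      define s where "s = min (e/2) (1/2)"
      have s: "0 < s" "s < e" "s \<le> 1" using e by (auto simp: s_def)
      have "f x > f (x + s *\<^sub>R (xbar - x))" using e s by auto
      moreover have "x + s *\<^sub>R (xbar - x) = xbar + (1 - s) *\<^sub>R (x - xbar)"
        by (simp add: algebra_simps)
      moreover have "f (xbar + (1 - s) *\<^sub>R (x - xbar)) = f xbar" using F3[OF x, of "1 - s"] s by simp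
      ultimately show False using fx by simp
    qed
    thus "inner (df x) (xbar - x) = 0" using a by simp
  qed
  have F6: "\<And>x. x \<in> X1 \<Longrightarrow> df x \<noteq> 0 \<Longrightarrow> inner (df x) (xbar - x) \<ge> 0 \<Longrightarrow> x \<in> Sbar"
  proof -
    fix x assume x: "x \<in> X1" and nz: "df x \<noteq> 0" and ge: "inner (df x) (xbar - x) \<ge> 0"
    have xS: "x \<in> S" using F1[OF x] by simp
    have xG: "x \<in> \<Gamma>" using xS SX X by auto
    have "\<not> f xbar < f x"
    proof
      assume "f xbar < f x"
      hence "inner (df x) (xbar - x) < 0" using qc2[OF Gamma(1) f_qc dfG xG xbG nz] by blast
      thus False using ge by simp
    qed
    thus "x \<in> Sbar" using xS xbmin Sbar_def by force
  qed
  have sub: "\<And>x. x \<in> Sbar \<Longrightarrow> x \<in> X1 \<and> df x \<noteq> 0 \<and> inner (df x) (xbar - x) = 0 \<and> inner (df xbar) (x - xbar) = 0"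
    using F2 F4 F5 by (simp add: d_def)
  have dX1: "\<And>x. x \<in> X1 \<Longrightarrow> inner (df xbar) (x - xbar) \<ge> 0" using F1 by (simp add: d_def)
  have gen: "\<And>P. (\<And>x. x \<in> Sbar \<Longrightarrow> P x) \<Longrightarrow>
      (\<And>x. x \<in> X1 \<Longrightarrow> P x \<Longrightarrow> x \<in> Sbar) \<Longrightarrow> Sbar = {x \<in> X1. P x}"
    using sub by blast
  show ?thesis
  proof (intro conjI)
    show "Sbar = {x \<in> X1. inner (df x) (xbar - x) = 0 \<and> df x \<noteq> 0}"
      by (rule gen) (use sub F6 in simp_all)
    show "Sbar = {x \<in> X1. inner (df x) (xbar - x) \<ge> 0 \<and> df x \<noteq> 0}"
      by (rule gen) (use sub F6 in simp_all)
    show "Sbar = {x \<in> X1. inner (df x) (xbar - x) = inner (df xbar) (x - xbar) \<and> df x \<noteq> 0}"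
    proof (rule gen)
      fix x assume "x \<in> X1" "inner (df x) (xbar - x) = inner (df xbar) (x - xbar) \<and> df x \<noteq> 0"
      thus "x \<in> Sbar" using F6 dX1 by fastforce
    qed (use sub in simp)
    show "Sbar = {x \<in> X1. inner (df x) (xbar - x) \<ge> inner (df xbar) (x - xbar) \<and> df x \<noteq> 0}"
    proof (rule gen)
      fix x assume "x \<in> X1" "inner (df x) (xbar - x) \<ge> inner (df xbar) (x - xbar) \<and> df x \<noteq> 0"
      thus "x \<in> Sbar" using F6 dX1 by (meson order_trans)
    qed (use sub in simp)
    show "Sbar = {x \<in> X1. inner (df x) (xbar - x) = inner (df xbar) (x - xbar)
                          \<and> inner (df xbar) (x - xbar) = 0 \<and> df x \<noteq> 0}"
      by (rule gen) (use sub F6 in simp_all)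
  qed
qed

end
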